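(* Let $\alpha\in(0,1)$ and $\nu\in\mathbb{N}$, and let $K_{\alpha,\nu}:\mathbb{R}\to\mathbb{R}$ be defined by \[ K_{\alpha,\nu}(x)=\sum_{k=0}^{\infty}2^{-2\alpha\nu k}\,\phi(2^{2\nu k}x), \] where $\phi:\mathbb{R}\to[0,1]$ is the $2$-periodic sawtooth function with $\phi(x)=|x|$ for $x\in[-1,1]$ and $\phi(x+2)=\phi(x)$ for all $x$. (i) $K_{\alpha,\nu}\in C^{0,\alpha}(\mathbb{R})$ for every $\nu\in\mathbb{N}$. Moreover $0\le K_{\alpha,\nu}\le 1/(1-2^{-2\nu\alpha})$, and for all $x,y\in\mathbb{R}$ with $|x-y|\le 2$, \[ |K_{\alpha,\nu}(x)-K_{\alpha,\nu}(y)|\le C(\alpha,\nu)\,|x-y|^{\alpha},\qquad C(\alpha,\nu):=\frac{1}{1-2^{-2\nu(1-\alpha)}}+\frac{2}{2^{2\nu(\alpha-1)}-2^{-2\nu}}. \] (ii) If $2\nu>1/(1-\alpha)$, then $K_{\alpha,\nu}$ is at no point of $\mathbb{R}$ pointwise H\"older continuous of order $\beta$, for any $\beta\in(\alpha,1]$. Moreover, for every $x\in\mathbb{R}$, every $m\in\mathbb{N}$ and every $\beta\in(\alpha,1]$, \[ \frac{|K_{\alpha,\nu}(x+t_m(x))-K_{\alpha,\nu}(x)|}{|t_m(x)|^{\beta}}\ \ge\ K(m,\nu,\alpha,\beta):=\frac{2^{\beta-1}\big(2^{2\nu(1-\alpha)}-2\big)}{2^{2\nu(1-\alpha)}-1}\big(2^{2\nu(\beta-\alpha)}\big)^{m},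 \] where $t_m:\mathbb{R}\to\{\pm 2^{-2\nu m-1}\}$ is the step function \[ t_m(x)=2^{-2\nu m-1}\sum_{i=-\infty}^{+\infty}\Big[\chi_{(i,i+\frac12]}(2^{2\nu m}x)-\chi_{(i+\frac12,i+1]}(2^{2\nu m}x)\Big], \] i.e. $t_m(x)=+2^{-2\nu m-1}$ if $i2^{-2\nu m}<x\le i2^{-2\nu m}+2^{-2\nu m-1}$ for some $i\in\mathbb{Z}$, and $t_m(x)=-2^{-2\nu m-1}$ if $i2^{-2\nu m}+2^{-2\nu m-1}<x\le (i+1)2^{-2\nu m}$ for some $i\in\mathbb{Z}$.
   Context: A function $f\in C^0(\mathbb{R})$ is called (pointwise) H\"older continuous of order $\beta$ ($C^{0,\beta}$) at $x\in\mathbb{R}$ if there exist $r,C>0$ such that $|f(y)-f(x)|\le C|y-x|^{\beta}$ for all $y\in[x-r,x+r]$. $\chi_A$ denotes the indicator function of a set $A$. *)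

theory Defs
  imports "HOL-Analysis.Analysis"
begin

(* 2-periodic sawtooth: phi x = |x| on [-1,1], phi (x+2) = phi x *)
definition saw :: "real \<Rightarrow> real" where
  "saw x = \<bar>x - 2 * of_int \<lfloor>(x + 1) / 2\<rfloor>\<bar>"

definition Kfun :: "real \<Rightarrow> nat \<Rightarrow> real \<Rightarrow> real" where
  "Kfun \<alpha> \<nu> x = (\<Sum>k. 2 powr (- 2 * \<alpha> * real \<nu> * real k) * saw (2 ^ (2 * \<nu> * k) * x))"

definition holder_at :: "(real \<Rightarrow> real) \<Rightarrow> real \<Rightarrow> real \<Rightarrow> bool" where
  "holder_at f \<beta> x \<longleftrightarrow> (\<exists>r>0. \<exists>C>0. \<forall>y\<in>{x - r..x + r}. \<bar>f y - f x\<bar> \<le> C * \<bar>y - x\<bar> powr \<beta>)"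

definition Cconst :: "real \<Rightarrow> nat \<Rightarrow> real" where
  "Cconst \<alpha> \<nu> = 1 / (1 - 2 powr (- 2 * real \<nu> * (1 - \<alpha>)))
     + 2 / (2 powr (2 * real \<nu> * (\<alpha> - 1)) - 2 powr (- 2 * real \<nu>))"

definition Kconst :: "nat \<Rightarrow> nat \<Rightarrow> real \<Rightarrow> real \<Rightarrow> real" where
  "Kconst m \<nu> \<alpha> \<beta> = 2 powr (\<beta> - 1) * (2 powr (2 * real \<nu> * (1 - \<alpha>)) - 2)
     / (2 powr (2 * real \<nu> * (1 - \<alpha>)) - 1) * (2 powr (2 * real \<nu> * (\<beta> - \<alpha>))) ^ m"

definition tm :: "nat \<Rightarrow> nat \<Rightarrow> real \<Rightarrow> real" where
  "tm \<nu> m x =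
    (let h = 2 powr (- 2 * real \<nu> * real m) in
     if \<exists>i::int. of_int i * h < x \<and> x \<le> of_int i * h + h / 2 then h / 2
     else if \<exists>i::int. of_int i * h + h / 2 < x \<and> x \<le> (of_int i + 1) * h then - (h / 2)
     else 0)"

end

theory Submission imports Defs begin

lemma saw_floor: "-1 \<le> (x::real) - 2 * of_int \<lfloor>(x + 1) / 2\<rfloor> \<and> x - 2 * of_int \<lfloor>(x + 1) / 2\<rfloor> < 1"
proof -
  have "of_int \<lfloor>(x + 1) / 2\<rfloor> \<le> (x+1)/2" "(x+1)/2 < of_int \<lfloor>(x + 1) / 2\<rfloor> + 1"
    by linarith+
  thus ?thesis by (simp add: field_simps)
qed

lemma saw_bounds: "0 \<le> saw x" "saw x \<le> 1"
  using saw_floor[of x] unfolding saw_def by auto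

lemma saw_le: "saw x \<le> \<bar>x - 2 * of_int n\<bar>"
proof -
  define f where "f = \<lfloor>(x + 1) / 2\<rfloor>"
  have F: "-1 \<le> x - 2 * of_int f" "x - 2 * of_int f < 1" using saw_floor[of x] f_def by auto
  have s: "saw x = \<bar>x - 2 * of_int f\<bar>" unfolding saw_def f_def by simp
  consider "n = f" | "n \<ge> f + 1" | "n \<le> f - 1" by linarith
  then show ?thesis
  proof cases
    case 1 then show ?thesis using s by simp
  next
    case 2 then have "real_of_int n \<ge> of_int f + 1" by linarith
    then show ?thesis using s F by linarith
  next
    case 3 then have "real_of_int n \<le> of_int f - 1" by linarith
    then show ?thesis using s F by linarith
  qed
qed

lemma saw_lip: "\<bar>saw x - saw y\<bar> \<le> \<bar>x - y\<bar>"
proof -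
  have "saw x \<le> \<bar>x - 2 * of_int \<lfloor>(y + 1) / 2\<rfloor>\<bar>" by (rule saw_le)
  moreover have "saw y \<le> \<bar>y - 2 * of_int \<lfloor>(x + 1) / 2\<rfloor>\<bar>" by (rule saw_le)
  ultimately show ?thesis unfolding saw_def by linarith
qed

lemma saw_period: "saw (x + 2 * of_int n) = saw x"
proof -
  have "(x + 2 * of_int n + 1) / 2 = (x + 1) / 2 + of_int n" by (simp add: field_simps)
  then have "\<lfloor>(x + 2 * of_int n + 1) / 2\<rfloor> = \<lfloor>(x + 1) / 2\<rfloor> + n"
    by (metis floor_add_int)
  then show ?thesis unfolding saw_def by simp
qed

lemma saw_eq: assumes "\<bar>x - 2 * of_int n\<bar> \<le> 1" shows "saw x = \<bar>x - 2 * of_int n\<bar>"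
proof (cases "x - 2 * of_int n = 1")
  case True
  then have "(x + 1) / 2 = of_int (n + 1)" by (simp add: field_simps)
  then have "\<lfloor>(x + 1) / 2\<rfloor> = n + 1" by (metis floor_of_int)
  then show ?thesis unfolding saw_def using True by simp
next
  case False
  then have "of_int n \<le> (x + 1) / 2" "(x + 1) / 2 < of_int n + 1" using assms by (auto simp: field_simps abs_if split: if_splits)
  then have "\<lfloor>(x + 1) / 2\<rfloor> = n" by (simp add: floor_eq_iff)
  then show ?thesis unfolding saw_def by simp
qed

lemma saw_lin:
  fixes i :: int
  assumes "of_int i \<le> u" "u \<le> of_int i + 1" "of_int i \<le> v" "v \<le> of_int i + 1"
  shows "\<bar>saw u - saw v\<bar> = \<bar>u - v\<bar>"
proof (cases "even i")
  case True
  then obtain p where p: "i = 2 * p" by blast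
  have "saw u = \<bar>u - 2 * of_int p\<bar>" "saw v = \<bar>v - 2 * of_int p\<bar>"
    using assms p by (intro saw_eq; simp)+
  then show ?thesis using assms p by simp
next
  case False
  then obtain p where p: "i = 2 * p + 1" using oddE by blast
  have "saw u = \<bar>u - 2 * of_int (p+1)\<bar>" "saw v = \<bar>v - 2 * of_int (p+1)\<bar>"
    using assms p by (intro saw_eq; simp)+
  then show ?thesis using assms p by simp
qed


context
  fixes \<alpha> :: real and \<nu> :: nat
  assumes a0: "0 < \<alpha>" and a1: "\<alpha> < 1" and nu1: "\<nu> \<ge> 1"
begin

definition "bb = (2::real) ^ (2 * \<nu>)"
definition "aa = (2::real) powr (- 2 * \<alpha> * real \<nu>)"
definition "qq = aa * bb"

lemma bb_ge: "bb \<ge> 4"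
proof -
  have "(2::real) ^ 2 \<le> 2 ^ (2 * \<nu>)" using nu1 by (intro power_increasing) auto
  then show ?thesis unfolding bb_def by simp
qed

lemma bb_pos: "bb > 0" using bb_ge by simp

lemma bb_powr: "bb powr t = 2 powr (2 * real \<nu> * t)"
proof -
  have "bb = 2 powr real (2 * \<nu>)" unfolding bb_def by (subst powr_realpow) auto
  then show ?thesis by (simp add: powr_powr)
qed

lemma aa_eq: "aa = bb powr (- \<alpha>)" unfolding aa_def bb_powr by (simp add: algebra_simps)
lemma qq_eq: "qq = bb powr (1 - \<alpha>)"
proof -
  have "bb powr (- \<alpha>) * bb powr 1 = bb powr (1 - \<alpha>)" by (simp only: powr_add[symmetric]) simp
  then show ?thesis unfolding qq_def aa_eq using bb_pos by simp
qed

lemma aa_pos: "aa > 0" unfolding aa_def by simp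
lemma aa_lt1: "aa < 1"
proof -
  have "bb powr (- \<alpha>) < bb powr 0" using bb_ge a0 by (intro powr_less_mono) auto
  then show ?thesis using aa_eq bb_pos by simp
qed
lemma qq_gt1: "qq > 1"
proof -
  have "bb powr 0 < bb powr (1 - \<alpha>)" using bb_ge a1 by (intro powr_less_mono) auto
  then show ?thesis using qq_eq bb_pos by simp
qed
lemma qq_lt_bb: "qq < bb"
proof -
  have "bb powr (1 - \<alpha>) < bb powr 1" using bb_ge a0 by (intro powr_less_mono) auto
  then show ?thesis using qq_eq bb_pos by simp
qed

lemma weight: "2 powr (- 2 * \<alpha> * real \<nu> * real k) = aa ^ k"
proof -
  have "aa ^ k = aa powr real k" using aa_pos by (simp add: powr_realpow)
  also have "\<dots> = 2 powr (- 2 * \<alpha> * real \<nu> * real k)" unfolding aa_def by (simp add: powr_powr)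
  finally show ?thesis by simp
qed

lemma pow_eq: "(2::real) ^ (2 * \<nu> * k) = bb ^ k" unfolding bb_def by (simp add: power_mult)

lemma Kfun_eq: "Kfun \<alpha> \<nu> x = (\<Sum>k. aa ^ k * saw (bb ^ k * x))"
  unfolding Kfun_def weight pow_eq ..

lemma summ: "summable (\<lambda>k. aa ^ k * saw (bb ^ k * x))"
proof (rule summable_comparison_test[where g = "\<lambda>k. aa ^ k"])
  show "\<exists>N. \<forall>n\<ge>N. norm (aa ^ n * saw (bb ^ n * x)) \<le> aa ^ n"
    using saw_bounds aa_pos by (auto intro!: mult_left_le simp: abs_mult)
  show "summable (\<lambda>k. aa ^ k)" using aa_pos aa_lt1 by (simp add: summable_geometric)
qed

lemma Kfun_bounds: "0 \<le> Kfun \<alpha> \<nu> x" "Kfun \<alpha> \<nu> x \<le> 1 / (1 - aa)"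
proof -
  show "0 \<le> Kfun \<alpha> \<nu> x" unfolding Kfun_eq
    using summ saw_bounds aa_pos by (intro suminf_nonneg) auto
  have "(\<Sum>k. aa ^ k * saw (bb ^ k * x)) \<le> (\<Sum>k. aa ^ k)"
    using summ saw_bounds aa_pos aa_lt1
    by (intro suminf_le) (auto intro!: mult_left_le simp: summable_geometric)
  also have "\<dots> = 1 / (1 - aa)" using aa_pos aa_lt1 by (simp add: suminf_geometric)
  finally show "Kfun \<alpha> \<nu> x \<le> 1 / (1 - aa)" unfolding Kfun_eq .
qed


lemma powr_pow_swap: "(bb powr c) ^ n = (bb ^ n) powr c"
proof -
  have "(bb powr c) ^ n = (bb powr c) powr real n" using bb_pos by (simp add: powr_realpow)
  also have "\<dots> = bb powr (real n * c)" by (simp add: powr_powr mult.commute)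
  also have "\<dots> = (bb powr real n) powr c" by (simp add: powr_powr)
  also have "\<dots> = (bb ^ n) powr c" using bb_pos by (simp add: powr_realpow)
  finally show ?thesis .
qed

lemma holder: "\<bar>Kfun \<alpha> \<nu> x - Kfun \<alpha> \<nu> y\<bar> \<le> (1 / (1 - 1 / qq) + 1 / (1 - aa)) * \<bar>x - y\<bar> powr \<alpha>"
proof -
  define h where "h = \<bar>x - y\<bar>"
  define D where "D k = aa ^ k * (saw (bb ^ k * x) - saw (bb ^ k * y))" for k
  define C1 where "C1 = 1 / (1 - 1 / qq)"
  define C2 where "C2 = 1 / (1 - aa)"
  have C1pos: "C1 > 0" unfolding C1_def using qq_gt1 by (simp add: field_simps)
  have C2pos: "C2 > 0" unfolding C2_def using aa_lt1 by simp
  have Dle1: "\<bar>D k\<bar> \<le> aa ^ k" for k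
  proof -
    have "\<bar>saw (bb ^ k * x) - saw (bb ^ k * y)\<bar> \<le> 1" using saw_bounds[of "bb^k*x"] saw_bounds[of "bb^k*y"] by (simp add: abs_le_iff)
    then show ?thesis unfolding D_def using aa_pos by (simp add: abs_mult mult_left_le)
  qed
  have Dle2: "\<bar>D k\<bar> \<le> qq ^ k * h" for k
  proof -
    have "\<bar>saw (bb ^ k * x) - saw (bb ^ k * y)\<bar> \<le> \<bar>bb ^ k * x - bb ^ k * y\<bar>" by (rule saw_lip)
    also have "\<dots> = bb ^ k * h" unfolding h_def using bb_pos by (simp add: abs_mult right_diff_distrib[symmetric])
    finally have "\<bar>D k\<bar> \<le> aa ^ k * (bb ^ k * h)" unfolding D_def using aa_pos
      by (simp add: abs_mult mult_left_mono)
    then show ?thesis unfolding qq_def by (simp add: power_mult_distrib mult.assoc)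
  qed
  have geo: "summable (\<lambda>k. aa ^ k)" using aa_pos aa_lt1 by (simp add: summable_geometric)
  have sD: "summable (\<lambda>k. \<bar>D k\<bar>)"
    by (rule summable_comparison_test[OF _ geo]) (use Dle1 in auto)
  have diff: "Kfun \<alpha> \<nu> x - Kfun \<alpha> \<nu> y = suminf D"
    unfolding Kfun_eq D_def by (simp add: suminf_diff[OF summ summ] right_diff_distrib)
  have absle: "\<bar>Kfun \<alpha> \<nu> x - Kfun \<alpha> \<nu> y\<bar> \<le> (\<Sum>k. \<bar>D k\<bar>)"
    unfolding diff by (rule summable_rabs[OF sD])
  have totle: "(\<Sum>k. \<bar>D k\<bar>) \<le> C2"
  proof -
    have "(\<Sum>k. \<bar>D k\<bar>) \<le> (\<Sum>k. aa ^ k)" by (intro suminf_le sD geo Dle1)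
    then show ?thesis unfolding C2_def using aa_pos aa_lt1 by (simp add: suminf_geometric)
  qed
  consider "h = 0" | "h \<ge> 1" | "0 < h" "h < 1" unfolding h_def by linarith
  then have "(\<Sum>k. \<bar>D k\<bar>) \<le> (C1 + C2) * h powr \<alpha>"
  proof cases
    case 1
    then have "x = y" unfolding h_def by simp
    then show ?thesis unfolding D_def using C1pos C2pos by simp
  next
    case 2
    then have "1 \<le> h powr \<alpha>" using a0 by (intro ge_one_powr_ge_zero) auto
    then have "C1 + C2 \<le> (C1 + C2) * h powr \<alpha>" using C1pos C2pos
      mult_left_mono[of 1 "h powr \<alpha>" "C1 + C2"] by simp
    then have "C2 \<le> (C1 + C2) * h powr \<alpha>" using C1pos by linarith
    then show ?thesis using totle by linarith
  next
    case 3
    have ex: "\<exists>n. 1 < bb ^ n * h"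
    proof -
      obtain n where "1 / h < bb ^ n" using real_arch_pow[of bb "1/h"] bb_ge by auto
      then show ?thesis using 3 by (auto simp: field_simps)
    qed
    define N where "N = (LEAST n. 1 < bb ^ n * h)"
    have hN: "1 < bb ^ N * h" unfolding N_def by (rule LeastI_ex[OF ex])
    have N0: "N \<noteq> 0" using hN 3 by (cases N) auto
    have hN1: "bb ^ (N - 1) * h \<le> 1"
    proof -
      have "\<not> 1 < bb ^ (N - 1) * h" unfolding N_def
        by (rule not_less_Least) (use N0 N_def in auto)
      then show ?thesis by simp
    qed
    have split: "(\<Sum>k. \<bar>D k\<bar>) = (\<Sum>k. \<bar>D (k + N)\<bar>) + (\<Sum>k<N. \<bar>D k\<bar>)"
      by (rule suminf_split_initial_segment[OF sD])
    have tail: "(\<Sum>k. \<bar>D (k + N)\<bar>) \<le> C2 * h powr \<alpha>"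
    proof -
      have s2: "summable (\<lambda>k. \<bar>D (k + N)\<bar>)" by (rule summable_ignore_initial_segment[OF sD])
      have "(\<Sum>k. \<bar>D (k + N)\<bar>) \<le> (\<Sum>k. aa ^ N * aa ^ k)"
        using Dle1 by (intro suminf_le s2 summable_mult geo) (metis power_add mult.commute)
      also have "\<dots> = aa ^ N * C2" unfolding C2_def using aa_pos aa_lt1
        by (simp add: suminf_mult[OF geo] suminf_geometric)
      also have "aa ^ N \<le> h powr \<alpha>"
      proof -
        have "aa ^ N = (bb ^ N) powr (- \<alpha>)" unfolding aa_eq by (rule powr_pow_swap)
        also have "\<dots> = 1 / (bb ^ N) powr \<alpha>" by (simp add: powr_minus_divide)
        also have "\<dots> \<le> h powr \<alpha>"
        proof -
          have "1 \<le> (bb ^ N * h) powr \<alpha>" using hN a0 by (intro ge_one_powr_ge_zero) auto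
          also have "\<dots> = (bb ^ N) powr \<alpha> * h powr \<alpha>" using bb_pos 3 by (simp add: powr_mult)
          finally show ?thesis using bb_pos by (simp add: divide_le_eq mult.commute)
        qed
        finally show ?thesis .
      qed
      then have "aa ^ N * C2 \<le> h powr \<alpha> * C2" using C2pos by simp
      finally show ?thesis by (simp add: mult.commute)
    qed
    have head: "(\<Sum>k<N. \<bar>D k\<bar>) \<le> C1 * h powr \<alpha>"
    proof -
      have gs: "(\<Sum>k<N. qq ^ k) = (qq ^ N - 1) / (qq - 1)" using qq_gt1
        by (simp add: sum_gp_strict divide_simps) (simp add: algebra_simps)
      have "(\<Sum>k<N. \<bar>D k\<bar>) \<le> (\<Sum>k<N. qq ^ k * h)" by (intro sum_mono Dle2)
      also have "\<dots> = h * (\<Sum>k<N. qq ^ k)" by (simp add: sum_distrib_left mult.commute)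
      also have "\<dots> = h * ((qq ^ N - 1) / (qq - 1))" using gs by simp
      also have "\<dots> \<le> h * (qq ^ N / (qq - 1))" using qq_gt1 3 by (intro mult_left_mono divide_right_mono) auto
      also have "qq ^ N / (qq - 1) = qq ^ (N - 1) * C1"
      proof -
        have "qq ^ N = qq ^ (N - 1) * qq" using N0 by (metis Suc_pred' neq0_conv power_Suc2)
        then show ?thesis unfolding C1_def using qq_gt1 by (simp add: field_simps)
      qed
      also have "h * (qq ^ (N - 1) * C1) = (h * qq ^ (N - 1)) * C1" by simp
      also have "h * qq ^ (N - 1) \<le> h powr \<alpha>"
      proof -
        have "qq ^ (N - 1) = (bb ^ (N - 1)) powr (1 - \<alpha>)" unfolding qq_eq by (rule powr_pow_swap)
        moreover have "h = h powr \<alpha> * h powr (1 - \<alpha>)" using 3 by (simp add: powr_add[symmetric])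
        ultimately have "h * qq ^ (N - 1) = h powr \<alpha> * (h * bb ^ (N - 1)) powr (1 - \<alpha>)"
          using 3 bb_pos by (simp add: powr_mult)
        also have "(h * bb ^ (N - 1)) powr (1 - \<alpha>) \<le> 1 powr (1 - \<alpha>)"
          using hN1 3 bb_pos a1 by (intro powr_mono2) (auto simp: mult.commute)
        finally show ?thesis using 3 by simp
      qed
      then have "(h * qq ^ (N - 1)) * C1 \<le> h powr \<alpha> * C1" using C1pos by simp
      finally show ?thesis by (simp add: mult.commute)
    qed
    show ?thesis using split tail head by (simp add: algebra_simps)
  qed
  then show ?thesis using absle unfolding C1_def C2_def h_def by linarith
qed


lemma h_eq: "2 powr (- 2 * real \<nu> * real m) = 1 / bb ^ m"
proof -
  have "2 powr (- 2 * real \<nu> * real m) = bb powr (- real m)" unfolding bb_powr by simp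
  also have "\<dots> = 1 / bb ^ m" using bb_pos by (simp add: powr_minus_divide powr_realpow)
  finally show ?thesis .
qed

lemma tm_cases:
  fixes m :: nat and x :: real
  defines "h \<equiv> 2 powr (- 2 * real \<nu> * real m)"
  shows "\<exists>(i::int) s. (s = 1/2 \<or> s = -1/2) \<and> tm \<nu> m x = h * s \<and> of_int i \<le> x / h \<and> x / h \<le> of_int i + 1
     \<and> of_int i \<le> x / h + s \<and> x / h + s \<le> of_int i + 1"
proof -
  have hp: "h > 0" unfolding h_def by simp
  show ?thesis
  proof (cases "\<exists>i::int. of_int i * h < x \<and> x \<le> of_int i * h + h / 2")
    case True
    then obtain i :: int where i: "of_int i * h < x" "x \<le> of_int i * h + h / 2" by blast
    have t: "tm \<nu> m x = h * (1/2)" using True unfolding tm_def h_def Let_def by simp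
    have "of_int i < x / h" "x / h \<le> of_int i + 1/2" using i hp by (simp_all add: field_simps)
    then show ?thesis using t by (intro exI[of _ i] exI[of _ "1/2"]) auto
  next
    case False
    define i where "i = \<lceil>x / h\<rceil> - 1"
    have i1: "of_int i < x / h" "x / h \<le> of_int i + 1" unfolding i_def by linarith+
    have "\<not> (x / h \<le> of_int i + 1/2)"
    proof
      assume "x / h \<le> of_int i + 1/2"
      then have "of_int i * h < x \<and> x \<le> of_int i * h + h / 2" using i1 hp by (simp add: field_simps)
      then show False using False by blast
    qed
    then have i2: "of_int i + 1/2 < x / h" by simp
    have "of_int i * h + h / 2 < x" "x \<le> (of_int i + 1) * h" using i1 i2 hp by (simp_all add: field_simps)
    then have "tm \<nu> m x = h * (- 1/2)" using False unfolding tm_def h_def Let_def by auto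
    then show ?thesis using i1 i2 by (intro exI[of _ i] exI[of _ "-1/2"]) auto
  qed
qed

lemma lower: "\<bar>Kfun \<alpha> \<nu> (x + tm \<nu> m x) - Kfun \<alpha> \<nu> x\<bar> \<ge> \<bar>tm \<nu> m x\<bar> * (qq ^ m - (\<Sum>k<m. qq ^ k))"
proof -
  define h where "h = 2 powr (- 2 * real \<nu> * real m)"
  obtain i s where isf: "(s = 1/2 \<or> s = -1/2)" "tm \<nu> m x = h * s" "of_int i \<le> x / h" "x / h \<le> of_int i + 1"
     "of_int i \<le> x / h + s" "x / h + s \<le> of_int i + 1"
    using tm_cases[of m x] unfolding h_def by blast
  define t where "t = tm \<nu> m x"
  have hb: "h = 1 / bb ^ m" unfolding h_def by (rule h_eq)
  have bbh: "bb ^ m * h = 1" using hb bb_pos by simp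
  have hp: "h > 0" unfolding h_def by simp
  have abst: "\<bar>t\<bar> = h / 2" using isf(1,2) hp unfolding t_def by (auto simp: abs_mult)
  define D where "D k = aa ^ k * (saw (bb ^ k * (x + t)) - saw (bb ^ k * x))" for k
  have diff: "Kfun \<alpha> \<nu> (x + t) - Kfun \<alpha> \<nu> x = suminf D"
    unfolding Kfun_eq D_def by (simp add: suminf_diff[OF summ summ] right_diff_distrib)
  have Dz: "D k = 0" if "k \<notin> {..m}" for k
  proof -
    have km: "k > m" using that by simp
    define n0 where "n0 = 2 * \<nu> * (k - m) - 2"
    have "1 \<le> \<nu> * (k - m)" using km nu1 by (simp add: Suc_le_eq)
    then have "2 * \<nu> * (k - m) = n0 + 2" unfolding n0_def by (simp only: mult.assoc)
    then have bkm: "bb ^ (k - m) = 4 * 2 ^ n0" unfolding bb_def by (simp add: power_mult[symmetric] power_add)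
    have "bb ^ k = bb ^ (k - m) * bb ^ m" using km by (simp add: power_add[symmetric])
    then have "bb ^ k * t = bb ^ (k - m) * s" using isf bbh unfolding t_def by (simp add: mult.assoc)
    also have "\<dots> = 2 * of_int (if s = 1/2 then 2 ^ n0 else - (2 ^ n0))" using isf(1) bkm by auto
    finally have "bb ^ k * (x + t) = bb ^ k * x + 2 * of_int (if s = 1/2 then 2 ^ n0 else - (2 ^ n0))"
      by (simp add: distrib_left)
    then show ?thesis unfolding D_def by (simp add: saw_period)
  qed
  have "suminf D = (\<Sum>k\<in>{..m}. D k)" by (rule suminf_finite) (use Dz in auto)
  also have "\<dots> = D m + (\<Sum>k<m. D k)" by (simp add: lessThan_Suc_atMost[symmetric])
  finally have sumD: "Kfun \<alpha> \<nu> (x + t) - Kfun \<alpha> \<nu> x = D m + (\<Sum>k<m. D k)" using diff by simp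
  have Dm: "\<bar>D m\<bar> = qq ^ m * \<bar>t\<bar>"
  proof -
    have "bb ^ m * x = x / h" using bbh hb by simp
    moreover have "bb ^ m * (x + t) = x / h + s" using bbh hb isf bb_pos unfolding t_def by (simp add: distrib_left)
    ultimately have "\<bar>saw (bb ^ m * (x + t)) - saw (bb ^ m * x)\<bar> = \<bar>s\<bar>"
      using saw_lin[of i "x / h + s" "x / h"] isf by simp
    also have "\<bar>s\<bar> = bb ^ m * \<bar>t\<bar>" using abst bbh isf by auto
    finally show ?thesis unfolding D_def qq_def using aa_pos
      by (simp add: abs_mult power_mult_distrib)
  qed
  have Dk: "\<bar>D k\<bar> \<le> qq ^ k * \<bar>t\<bar>" for k
  proof -
    have "\<bar>saw (bb ^ k * (x + t)) - saw (bb ^ k * x)\<bar> \<le> \<bar>bb ^ k * (x + t) - bb ^ k * x\<bar>" by (rule saw_lip)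
    also have "\<dots> = bb ^ k * \<bar>t\<bar>" using bb_pos by (simp add: abs_mult distrib_left)
    finally have "\<bar>D k\<bar> \<le> aa ^ k * (bb ^ k * \<bar>t\<bar>)" unfolding D_def using aa_pos
      by (simp add: abs_mult mult_left_mono)
    then show ?thesis unfolding qq_def by (simp add: power_mult_distrib mult.assoc)
  qed
  have "\<bar>\<Sum>k<m. D k\<bar> \<le> (\<Sum>k<m. qq ^ k * \<bar>t\<bar>)"
    by (rule order_trans[OF sum_abs sum_mono]) (rule Dk)
  also have "\<dots> = \<bar>t\<bar> * (\<Sum>k<m. qq ^ k)" by (simp add: sum_distrib_left mult.commute)
  finally have "\<bar>\<Sum>k<m. D k\<bar> \<le> \<bar>t\<bar> * (\<Sum>k<m. qq ^ k)" .
  then have "\<bar>D m + (\<Sum>k<m. D k)\<bar> \<ge> \<bar>t\<bar> * (qq ^ m - (\<Sum>k<m. qq ^ k))"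
    using Dm by (simp add: right_diff_distrib mult.commute)
  then show ?thesis using sumD unfolding t_def by simp
qed


lemma pow2: "((2::real) powr c) ^ m = 2 powr (c * real m)"
  by (simp add: powr_realpow[symmetric] powr_powr)

lemma qq2: "2 powr (2 * real \<nu> * (1 - \<alpha>)) = qq" unfolding qq_eq bb_powr ..

lemma Kconst_eq: "Kconst m \<nu> \<alpha> \<beta> = 2 powr (\<beta> - 1) * (qq - 2) / (qq - 1) * (2 powr (2 * real \<nu> * (\<beta> - \<alpha>))) ^ m"
  unfolding Kconst_def qq2 ..

lemma ratio: "\<bar>Kfun \<alpha> \<nu> (x + tm \<nu> m x) - Kfun \<alpha> \<nu> x\<bar> / \<bar>tm \<nu> m x\<bar> powr \<beta> \<ge> Kconst m \<nu> \<alpha> \<beta>"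
proof -
  define h where "h = 2 powr (- 2 * real \<nu> * real m)"
  obtain i s where isf: "(s = 1/2 \<or> s = -1/2)" "tm \<nu> m x = h * s"
    using tm_cases[of m x] unfolding h_def by blast
  have hp: "h > 0" unfolding h_def by simp
  define T where "T = \<bar>tm \<nu> m x\<bar>"
  have T: "T = h / 2" using isf hp unfolding T_def by (auto simp: abs_mult)
  have T2: "T = 2 powr (- 2 * real \<nu> * real m - 1)" unfolding T h_def by (simp add: powr_diff)
  have Tp: "T > 0" using T hp by simp
  define S where "S = (\<Sum>k<m. qq ^ k)"
  have gs: "S = (qq ^ m - 1) / (qq - 1)" unfolding S_def using qq_gt1
    by (simp add: sum_gp_strict divide_simps) (simp add: algebra_simps)
  have low: "\<bar>Kfun \<alpha> \<nu> (x + tm \<nu> m x) - Kfun \<alpha> \<nu> x\<bar> \<ge> T * (qq ^ m - S)"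
    using lower unfolding T_def S_def .
  have "qq ^ m * (qq - 2) / (qq - 1) \<le> qq ^ m - S"
  proof -
    have "qq ^ m - S - qq ^ m * (qq - 2) / (qq - 1) = 1 / (qq - 1)" unfolding gs using qq_gt1
      by (simp add: field_simps)
    then show ?thesis using qq_gt1 by (smt (verit) divide_pos_pos)
  qed
  then have low2: "T * (qq ^ m * (qq - 2) / (qq - 1)) \<le> \<bar>Kfun \<alpha> \<nu> (x + tm \<nu> m x) - Kfun \<alpha> \<nu> x\<bar>"
    using low Tp by (smt (verit) mult_left_mono)
  have ident: "Kconst m \<nu> \<alpha> \<beta> * T powr \<beta> = T * (qq ^ m * (qq - 2) / (qq - 1))"
  proof -
    have e1: "2 powr (\<beta> - 1) * (2 powr (2 * real \<nu> * (\<beta> - \<alpha>))) ^ m * T powr \<beta> = T * qq ^ m"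
    proof -
      have "2 powr (\<beta> - 1) * (2 powr (2 * real \<nu> * (\<beta> - \<alpha>))) ^ m * T powr \<beta>
          = 2 powr (\<beta> - 1 + 2 * real \<nu> * (\<beta> - \<alpha>) * real m + (- 2 * real \<nu> * real m - 1) * \<beta>)"
        unfolding pow2 T2 by (simp add: powr_powr powr_add)
      also have "\<dots> = 2 powr ((- 2 * real \<nu> * real m - 1) + 2 * real \<nu> * (1 - \<alpha>) * real m)"
        by (rule arg_cong[where f = "\<lambda>e. 2 powr e"]) (simp add: algebra_simps)
      also have "\<dots> = T * qq ^ m" unfolding T2 qq2[symmetric] pow2 by (simp add: powr_add)
      finally show ?thesis .
    qed
    show ?thesis unfolding Kconst_eq using e1 by (simp add: algebra_simps)
  qed
  have Tbp: "T powr \<beta> > 0" using Tp by simp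
  have "Kconst m \<nu> \<alpha> \<beta> = T * (qq ^ m * (qq - 2) / (qq - 1)) / T powr \<beta>"
    using ident Tbp by (metis less_irrefl nonzero_mult_div_cancel_right)
  also have "\<dots> \<le> \<bar>Kfun \<alpha> \<nu> (x + tm \<nu> m x) - Kfun \<alpha> \<nu> x\<bar> / T powr \<beta>"
    using low2 Tbp by (intro divide_right_mono) auto
  finally show ?thesis unfolding T_def .
qed


lemma nonholder:
  assumes q2: "qq > 2" and b: "\<alpha> < \<beta>"
  shows "\<not> holder_at (Kfun \<alpha> \<nu>) \<beta> x"
proof
  assume "holder_at (Kfun \<alpha> \<nu>) \<beta> x"
  then obtain r C where r: "r > 0" and C: "C > 0"
    and H: "\<And>y. y \<in> {x - r..x + r} \<Longrightarrow> \<bar>Kfun \<alpha> \<nu> y - Kfun \<alpha> \<nu> x\<bar> \<le> C * \<bar>y - x\<bar> powr \<beta>"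
    unfolding holder_at_def by blast
  define c0 where "c0 = 2 powr (\<beta> - 1) * (qq - 2) / (qq - 1)"
  define P where "P = (2::real) powr (2 * real \<nu> * (\<beta> - \<alpha>))"
  have c0p: "c0 > 0" unfolding c0_def using q2 by simp
  have P1: "P > 1" unfolding P_def using b nu1 by simp
  obtain m1 where m1: "C / c0 < P ^ m1" using real_arch_pow[OF P1] by blast
  obtain m2 where m2: "1 / r < bb ^ m2" using real_arch_pow[of bb "1/r"] bb_ge by auto
  define m where "m = max m1 m2"
  have "P ^ m1 \<le> P ^ m" unfolding m_def using P1 by (intro power_increasing) auto
  then have "C / c0 < P ^ m" using m1 by linarith
  then have KC: "C < Kconst m \<nu> \<alpha> \<beta>" unfolding Kconst_eq c0_def[symmetric] P_def[symmetric]
    using c0p by (simp add: field_simps)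
  have "bb ^ m2 \<le> bb ^ m" unfolding m_def using bb_ge by (intro power_increasing) auto
  then have rb: "1 / r < bb ^ m" using m2 by linarith
  define t where "t = tm \<nu> m x"
  define h where "h = 2 powr (- 2 * real \<nu> * real m)"
  obtain s where isf: "(s = 1/2 \<or> s = -1/2)" "tm \<nu> m x = h * s"
    using tm_cases[of m x] unfolding h_def by blast
  have hp: "h > 0" unfolding h_def by simp
  have at: "\<bar>t\<bar> = h / 2" using isf hp unfolding t_def by (auto simp: abs_mult)
  have "h = 1 / bb ^ m" unfolding h_def by (rule h_eq)
  then have "h * bb ^ m < r * bb ^ m" using rb r bb_pos by (simp add: field_simps)
  then have "h < r" using bb_pos by (simp add: mult_less_cancel_right_pos)
  then have "x + t \<in> {x - r..x + r}" using at hp by (auto simp: abs_le_iff)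
  from H[OF this] have "\<bar>Kfun \<alpha> \<nu> (x + t) - Kfun \<alpha> \<nu> x\<bar> \<le> C * \<bar>t\<bar> powr \<beta>" by simp
  moreover have "\<bar>t\<bar> powr \<beta> > 0" using at hp by simp
  ultimately have "\<bar>Kfun \<alpha> \<nu> (x + t) - Kfun \<alpha> \<nu> x\<bar> / \<bar>t\<bar> powr \<beta> \<le> C"
    by (simp add: divide_le_eq)
  moreover have "Kconst m \<nu> \<alpha> \<beta> \<le> \<bar>Kfun \<alpha> \<nu> (x + t) - Kfun \<alpha> \<nu> x\<bar> / \<bar>t\<bar> powr \<beta>"
    unfolding t_def by (rule ratio)
  ultimately show False using KC by linarith
qed

lemma Cconst_ge: "1 / (1 - 1 / qq) + 1 / (1 - aa) \<le> Cconst \<alpha> \<nu>"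
proof -
  have e1: "2 powr (- 2 * real \<nu> * (1 - \<alpha>)) = 1 / qq"
  proof -
    have "2 powr (- 2 * real \<nu> * (1 - \<alpha>)) = bb powr (- (1 - \<alpha>))" unfolding bb_powr
      by (rule arg_cong[where f = "\<lambda>e. 2 powr e"]) (simp add: algebra_simps)
    then show ?thesis unfolding qq_eq using powr_minus_divide[of bb "1 - \<alpha>"] by simp
  qed
  have e2: "2 powr (2 * real \<nu> * (\<alpha> - 1)) = 1 / qq"
  proof -
    have "2 * real \<nu> * (\<alpha> - 1) = - 2 * real \<nu> * (1 - \<alpha>)" by (simp add: algebra_simps)
    then show ?thesis using e1 by metis
  qed
  have e3: "2 powr (- 2 * real \<nu>) = 1 / bb"
  proof -
    have "2 powr (- 2 * real \<nu>) = bb powr (- 1)" unfolding bb_powr by simp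
    then show ?thesis using bb_pos by (simp add: powr_minus_divide)
  qed
  have qb: "qq < bb" "qq > 1" "bb > 0" using qq_lt_bb qq_gt1 bb_pos by auto
  have f1: "2 / (1 / qq - 1 / bb) = 2 * qq * bb / (bb - qq)" using qb by (simp add: field_simps)
  have aq: "aa = qq / bb" unfolding qq_def using qb by simp
  have f2: "1 / (1 - aa) = bb / (bb - qq)" unfolding aq using qb by (simp add: field_simps)
  have "bb / (bb - qq) \<le> 2 * qq * bb / (bb - qq)" using qb by (intro divide_right_mono) auto
  then show ?thesis unfolding Cconst_def e1 e2 e3 f1 f2 by simp
qed

lemma holderC: "\<bar>Kfun \<alpha> \<nu> x - Kfun \<alpha> \<nu> y\<bar> \<le> Cconst \<alpha> \<nu> * \<bar>x - y\<bar> powr \<alpha>"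
proof -
  have "(1 / (1 - 1 / qq) + 1 / (1 - aa)) * \<bar>x - y\<bar> powr \<alpha> \<le> Cconst \<alpha> \<nu> * \<bar>x - y\<bar> powr \<alpha>"
    using Cconst_ge by (intro mult_right_mono) auto
  then show ?thesis using holder[of x y] by linarith
qed

lemma cont: "continuous_on UNIV (Kfun \<alpha> \<nu>)"
proof -
  have "isCont (Kfun \<alpha> \<nu>) x" for x
  proof -
    have lim0: "((\<lambda>y. Cconst \<alpha> \<nu> * \<bar>y - x\<bar> powr \<alpha>) \<longlongrightarrow> 0) (at x)"
    proof (intro tendsto_mult_right_zero tendsto_zero_powrI)
      show "((\<lambda>y. \<bar>y - x\<bar>) \<longlongrightarrow> 0) (at x)"
        by (intro tendsto_rabs_zero LIM_zero tendsto_ident_at)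
    qed (use a0 in auto)
    have "((\<lambda>y. Kfun \<alpha> \<nu> y - Kfun \<alpha> \<nu> x) \<longlongrightarrow> 0) (at x)"
      by (rule Lim_null_comparison[OF _ lim0]) (simp add: holderC)
    then show ?thesis unfolding isCont_def by (rule LIM_zero_cancel)
  qed
  then show ?thesis by (simp add: continuous_on_eq_continuous_at)
qed

lemma main:
  "continuous_on UNIV (Kfun \<alpha> \<nu>)
    \<and> (\<exists>C. \<forall>x y. \<bar>Kfun \<alpha> \<nu> x - Kfun \<alpha> \<nu> y\<bar> \<le> C * \<bar>x - y\<bar> powr \<alpha>)
    \<and> (\<forall>x. 0 \<le> Kfun \<alpha> \<nu> x \<and> Kfun \<alpha> \<nu> x \<le> 1 / (1 - 2 powr (- 2 * real \<nu> * \<alpha>)))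
    \<and> (\<forall>x y. \<bar>x - y\<bar> \<le> 2 \<longrightarrow>
          \<bar>Kfun \<alpha> \<nu> x - Kfun \<alpha> \<nu> y\<bar> \<le> Cconst \<alpha> \<nu> * \<bar>x - y\<bar> powr \<alpha>)
    \<and> (2 * real \<nu> > 1 / (1 - \<alpha>) \<longrightarrow>
          (\<forall>x \<beta>. \<alpha> < \<beta> \<and> \<beta> \<le> 1 \<longrightarrow> \<not> holder_at (Kfun \<alpha> \<nu>) \<beta> x)
        \<and> (\<forall>x m \<beta>. \<alpha> < \<beta> \<and> \<beta> \<le> 1 \<longrightarrow>
             \<bar>Kfun \<alpha> \<nu> (x + tm \<nu> m x) - Kfun \<alpha> \<nu> x\<bar> / \<bar>tm \<nu> m x\<bar> powr \<beta>
               \<ge> Kconst m \<nu> \<alpha> \<beta>))"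
proof -
  have aa2: "2 powr (- 2 * real \<nu> * \<alpha>) = aa" unfolding aa_def
    by (rule arg_cong[where f = "\<lambda>e. 2 powr e"]) (simp add: algebra_simps)
  have q2: "qq > 2" if "2 * real \<nu> > 1 / (1 - \<alpha>)"
  proof -
    have "1 < 2 * real \<nu> * (1 - \<alpha>)" using that a1 by (simp add: field_simps)
    then have "2 powr 1 < 2 powr (2 * real \<nu> * (1 - \<alpha>))" by (intro powr_less_mono) auto
    then show ?thesis unfolding qq2 by simp
  qed
  show ?thesis
    using cont holderC Kfun_bounds nonholder ratio q2 unfolding aa2 by blast
qed

end

theorem theorem1:
  fixes \<alpha> :: real and \<nu> :: nat
  assumes "0 < \<alpha>" "\<alpha> < 1" "\<nu> \<ge> 1"
  shows "continuous_on UNIV (Kfun \<alpha> \<nu>)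
    \<and> (\<exists>C. \<forall>x y. \<bar>Kfun \<alpha> \<nu> x - Kfun \<alpha> \<nu> y\<bar> \<le> C * \<bar>x - y\<bar> powr \<alpha>)
    \<and> (\<forall>x. 0 \<le> Kfun \<alpha> \<nu> x \<and> Kfun \<alpha> \<nu> x \<le> 1 / (1 - 2 powr (- 2 * real \<nu> * \<alpha>)))
    \<and> (\<forall>x y. \<bar>x - y\<bar> \<le> 2 \<longrightarrow>
          \<bar>Kfun \<alpha> \<nu> x - Kfun \<alpha> \<nu> y\<bar> \<le> Cconst \<alpha> \<nu> * \<bar>x - y\<bar> powr \<alpha>)
    \<and> (2 * real \<nu> > 1 / (1 - \<alpha>) \<longrightarrow>
          (\<forall>x \<beta>. \<alpha> < \<beta> \<and> \<beta> \<le> 1 \<longrightarrow> \<not> holder_at (Kfun \<alpha> \<nu>) \<beta> x)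
        \<and> (\<forall>x m \<beta>. \<alpha> < \<beta> \<and> \<beta> \<le> 1 \<longrightarrow>
             \<bar>Kfun \<alpha> \<nu> (x + tm \<nu> m x) - Kfun \<alpha> \<nu> x\<bar> / \<bar>tm \<nu> m x\<bar> powr \<beta>
               \<ge> Kconst m \<nu> \<alpha> \<beta>))"
  by (rule main[OF assms])

end
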